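(* Let $S$ be a semigroup, $I, J$ sets and $P$ a $J \times I$ matrix with entries in $S$, and suppose the Rees matrix semigroup $M = M(S; I, J; P)$ is finitely generated. Let $\sigma : X^+ \to S$ and $\tau : Y^+ \to M$ be finite choices of generators. Then there is a rational transduction $\Phi$ from $\hat{X}^*$ to $\hat{Y}^*$ such that $L_\tau(M)$ is the Kleene closure of the image of $L_\sigma(S)$ under $\Phi$.
   Context: The Rees matrix semigroup $M(S; I, J; P)$ (with $P$ having all entries in $S$) has elements $I \times S \times J$ and product $(i_1, g_1, j_1)(i_2, g_2, j_2) = (i_1, g_1 P_{j_1 i_2} g_2, j_2)$. For a semigroup $S$, $S^1$ denotes the monoid obtained by adjoining a new identity $1$ (even if $S$ already has one). A choice of generators for $S$ is a surjective morphism $\sigma : X^+ \to S$ from a free semigroup, finite if $X$ is finite; it extends uniquely to $\sigma^1 : X^* \to S^1$. Let $\overline{X} = \{\overline{x} : x \in X\}$ be a set of formal inverses, $\hat{X} = X \cup \overline{X}$. The loop automaton of $S$ with respect to $\sigma$ is the directed labelled graph with vertex set $S^1$, having for each $a \in S^1$ and $x \in X$ an edge from $a$ to $a(x\sigma)$ labelled $x$ and an edge from $a(x\sigma)$ to $a$ labelled $\overline{x}$. The loop problem $L_\sigma(S) \subseteq \hat{X}^*$ is the set of words labelling paths from $1$ to $1$ in this graph (including the empty word). A rational transduction is a relation between free monoids realised by a finite-state transducer. *)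

theory Defs
  imports Main
begin

definition semigroup_on :: "'a set \<Rightarrow> ('a \<Rightarrow> 'a \<Rightarrow> 'a) \<Rightarrow> bool" where
  "semigroup_on S mult \<longleftrightarrow>
     (\<forall>a\<in>S. \<forall>b\<in>S. mult a b \<in> S) \<and>
     (\<forall>a\<in>S. \<forall>b\<in>S. \<forall>c\<in>S. mult (mult a b) c = mult a (mult b c))"

fun eval_word :: "('a \<Rightarrow> 'a \<Rightarrow> 'a) \<Rightarrow> ('x \<Rightarrow> 'a) \<Rightarrow> 'x list \<Rightarrow> 'a" where
  "eval_word mult gen [] = undefined"
| "eval_word mult gen (x # xs) = foldl (\<lambda>a y. mult a (gen y)) (gen x) xs"

definition generators :: "'a set \<Rightarrow> ('a \<Rightarrow> 'a \<Rightarrow> 'a) \<Rightarrow> ('x \<Rightarrow> 'a) \<Rightarrow> 'x set \<Rightarrow> bool" where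
  "generators S mult gen X \<longleftrightarrow>
     gen ` X \<subseteq> S \<and>
     (\<forall>s\<in>S. \<exists>w. w \<noteq> [] \<and> set w \<subseteq> X \<and> eval_word mult gen w = s)"

definition finitely_generated :: "'a set \<Rightarrow> ('a \<Rightarrow> 'a \<Rightarrow> 'a) \<Rightarrow> bool" where
  "finitely_generated S mult \<longleftrightarrow>
     (\<exists>(X::'a set) gen. finite X \<and> generators S mult gen X)"

definition rees_carrier :: "'a set \<Rightarrow> 'i set \<Rightarrow> 'j set \<Rightarrow> ('i \<times> 'a \<times> 'j) set" where
  "rees_carrier S I J = I \<times> S \<times> J"

fun rees_mult :: "('a \<Rightarrow> 'a \<Rightarrow> 'a) \<Rightarrow> ('j \<Rightarrow> 'i \<Rightarrow> 'a)
    \<Rightarrow> ('i \<times> 'a \<times> 'j) \<Rightarrow> ('i \<times> 'a \<times> 'j) \<Rightarrow> ('i \<times> 'a \<times> 'j)" where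
  "rees_mult mult P (i1, g1, j1) (i2, g2, j2) = (i1, mult (mult g1 (P j1 i2)) g2, j2)"

text \<open>Letters of X-hat = X together with formal inverses.\<close>
datatype 'x letter = Pos 'x | Neg 'x

definition hat :: "'x set \<Rightarrow> 'x letter set" where
  "hat X = Pos ` X \<union> Neg ` X"

text \<open>S^1 is represented by 'a option: None is the adjoined identity 1,
Some s is the element s of S.\<close>
definition mon1 :: "'a set \<Rightarrow> 'a option set" where
  "mon1 S = insert None (Some ` S)"

fun act :: "('a \<Rightarrow> 'a \<Rightarrow> 'a) \<Rightarrow> ('x \<Rightarrow> 'a) \<Rightarrow> 'a option \<Rightarrow> 'x \<Rightarrow> 'a option" where
  "act mult gen None x = Some (gen x)"
| "act mult gen (Some s) x = Some (mult s (gen x))"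

text \<open>Paths in the loop automaton: lpath a w b means w labels a path from a to b.
Edge a --x--> a(x sigma) and edge a(x sigma) --xbar--> a, for a in S^1, x in X.\<close>
inductive lpath :: "'a set \<Rightarrow> ('a \<Rightarrow> 'a \<Rightarrow> 'a) \<Rightarrow> ('x \<Rightarrow> 'a) \<Rightarrow> 'x set
    \<Rightarrow> 'a option \<Rightarrow> 'x letter list \<Rightarrow> 'a option \<Rightarrow> bool"
  for S mult gen X where
  nil: "a \<in> mon1 S \<Longrightarrow> lpath S mult gen X a [] a"
| pos: "a \<in> mon1 S \<Longrightarrow> x \<in> X \<Longrightarrow> lpath S mult gen X (act mult gen a x) w b
        \<Longrightarrow> lpath S mult gen X a (Pos x # w) b"
| neg: "a \<in> mon1 S \<Longrightarrow> x \<in> X \<Longrightarrow> lpath S mult gen X a w b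
        \<Longrightarrow> lpath S mult gen X (act mult gen a x) (Neg x # w) b"

definition loop_problem :: "'a set \<Rightarrow> ('a \<Rightarrow> 'a \<Rightarrow> 'a) \<Rightarrow> ('x \<Rightarrow> 'a) \<Rightarrow> 'x set
    \<Rightarrow> 'x letter list set" where
  "loop_problem S mult gen X = {w. lpath S mult gen X None w None}"

inductive trun :: "(nat \<times> 'a list \<times> 'b list \<times> nat) set \<Rightarrow> nat \<Rightarrow> 'a list \<Rightarrow> 'b list \<Rightarrow> nat \<Rightarrow> bool"
  for Delta where
  trun_nil: "trun Delta q [] [] q"
| trun_step: "(q, u, v, q') \<in> Delta \<Longrightarrow> trun Delta q' w z q''
        \<Longrightarrow> trun Delta q (u @ w) (v @ z) q''"

definition rational_transduction :: "'a set \<Rightarrow> 'b set \<Rightarrow> ('a list \<times> 'b list) set \<Rightarrow> bool" where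
  "rational_transduction A B R \<longleftrightarrow>
     (\<exists>Delta Init Fin. finite Delta \<and> finite Init \<and> finite Fin \<and>
        (\<forall>(q, u, v, q') \<in> Delta. set u \<subseteq> A \<and> set v \<subseteq> B) \<and>
        R = {(u, v). \<exists>q\<in>Init. \<exists>q'\<in>Fin. trun Delta q u v q'})"

definition rel_image :: "('a list \<times> 'b list) set \<Rightarrow> 'a list set \<Rightarrow> 'b list set" where
  "rel_image R L = {v. \<exists>u\<in>L. (u, v) \<in> R}"

definition kleene :: "'a list set \<Rightarrow> 'a list set" where
  "kleene L = {concat ws | ws. set ws \<subseteq> L}"

end

theory Submission
  imports Defs
begin

lemma act_mon1:
  assumes "\<forall>a\<in>S. \<forall>b\<in>S. mult a b \<in> S" "gen ` X \<subseteq> S" "c \<in> mon1 S" "x \<in> X"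
  shows "act mult gen c x \<in> mon1 S"
  using assms by (cases c) (auto simp: mon1_def)

lemma foldl_act_mon1:
  assumes "\<forall>a\<in>S. \<forall>b\<in>S. mult a b \<in> S" "gen ` X \<subseteq> S"
  shows "c \<in> mon1 S \<Longrightarrow> set w \<subseteq> X \<Longrightarrow> foldl (act mult gen) c w \<in> mon1 S"
  by (induction w arbitrary: c) (auto simp: act_mon1[OF assms])

lemma lpath_mon1:
  assumes "\<forall>a\<in>S. \<forall>b\<in>S. mult a b \<in> S" "gen ` X \<subseteq> S"
  shows "lpath S mult gen X a w b \<Longrightarrow> a \<in> mon1 S \<and> b \<in> mon1 S"
  by (induction rule: lpath.induct) (auto simp: act_mon1[OF assms])

lemma lpath_append:
  "lpath S mult gen X a u b \<Longrightarrow> lpath S mult gen X b v c \<Longrightarrow> lpath S mult gen X a (u @ v) c"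
  by (induction rule: lpath.induct) (auto intro: lpath.intros)

lemma lpath_Nil_inv: "lpath S mult gen X a [] b \<Longrightarrow> a = b"
  by (erule lpath.cases) auto

lemma lpath_Pos_inv: "lpath S mult gen X a (Pos x # w) b \<Longrightarrow>
    a \<in> mon1 S \<and> x \<in> X \<and> lpath S mult gen X (act mult gen a x) w b"
  by (erule lpath.cases) auto

lemma lpath_Neg_inv: "lpath S mult gen X c (Neg x # w) b \<Longrightarrow>
    \<exists>a. a \<in> mon1 S \<and> x \<in> X \<and> c = act mult gen a x \<and> lpath S mult gen X a w b"
  by (erule lpath.cases) auto

lemma lpath_split:
  assumes "\<forall>a\<in>S. \<forall>b\<in>S. mult a b \<in> S" "gen ` X \<subseteq> S"
  shows "lpath S mult gen X a (u @ v) c \<Longrightarrow> \<exists>b. lpath S mult gen X a u b \<and> lpath S mult gen X b v c"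
proof (induction u arbitrary: a)
  case Nil
  then have "a \<in> mon1 S" using lpath_mon1[OF assms, of a v c] by simp
  then show ?case using Nil by (auto intro: lpath.nil)
next
  case (Cons z u)
  show ?case
  proof (cases z)
    case (Pos x)
    with Cons.prems have h: "a \<in> mon1 S" "x \<in> X" "lpath S mult gen X (act mult gen a x) (u @ v) c"
      using lpath_Pos_inv by fastforce+
    from Cons.IH[OF h(3)] obtain b where "lpath S mult gen X (act mult gen a x) u b" "lpath S mult gen X b v c"
      by blast
    then show ?thesis using h Pos by (auto intro: lpath.pos)
  next
    case (Neg x)
    with Cons.prems obtain a' where h: "a' \<in> mon1 S" "x \<in> X" "a = act mult gen a' x"
        "lpath S mult gen X a' (u @ v) c"
      using lpath_Neg_inv by fastforce
    from Cons.IH[OF h(4)] obtain b where "lpath S mult gen X a' u b" "lpath S mult gen X b v c"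
      by blast
    then show ?thesis using h Neg by (auto intro: lpath.neg)
  qed
qed

lemma lpath_Pos_word: "lpath S mult gen X a (map Pos w) c \<Longrightarrow> c = foldl (act mult gen) a w"
proof (induction w arbitrary: a)
  case Nil then show ?case using lpath_Nil_inv by fastforce
next
  case (Cons x w) then show ?case using lpath_Pos_inv by fastforce
qed

lemma lpath_Pos_word_intro:
  assumes "\<forall>a\<in>S. \<forall>b\<in>S. mult a b \<in> S" "gen ` X \<subseteq> S"
  shows "a \<in> mon1 S \<Longrightarrow> set w \<subseteq> X \<Longrightarrow> lpath S mult gen X a (map Pos w) (foldl (act mult gen) a w)"
proof (induction w arbitrary: a)
  case Nil then show ?case by (auto intro: lpath.nil)
next
  case (Cons x w) then show ?case using act_mon1[OF assms] by (auto intro: lpath.pos)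
qed

lemma lpath_Neg_word:
  assumes "\<forall>a\<in>S. \<forall>b\<in>S. mult a b \<in> S" "gen ` X \<subseteq> S"
  shows "lpath S mult gen X c (map Neg (rev w)) e \<Longrightarrow> foldl (act mult gen) e w = c \<and> e \<in> mon1 S"
proof (induction w arbitrary: c rule: rev_induct)
  case Nil then show ?case using lpath_Nil_inv lpath_mon1[OF assms] by fastforce
next
  case (snoc x w)
  from snoc.prems obtain a where "a \<in> mon1 S" "x \<in> X" "c = act mult gen a x"
      "lpath S mult gen X a (map Neg (rev w)) e"
    using lpath_Neg_inv by fastforce
  with snoc.IH show ?case by auto
qed

lemma lpath_Neg_word_intro:
  assumes "\<forall>a\<in>S. \<forall>b\<in>S. mult a b \<in> S" "gen ` X \<subseteq> S"
  shows "e \<in> mon1 S \<Longrightarrow> set w \<subseteq> X \<Longrightarrow> lpath S mult gen X (foldl (act mult gen) e w) (map Neg (rev w)) e"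
proof (induction w rule: rev_induct)
  case Nil then show ?case by (auto intro: lpath.nil)
next
  case (snoc x w)
  then show ?case using foldl_act_mon1[OF assms, of e w] by (auto intro: lpath.neg)
qed

lemma foldl_act_Some:
  "foldl (act mult gen) (Some s) xs = Some (foldl (\<lambda>a y. mult a (gen y)) s xs)"
  by (induction xs arbitrary: s) auto

lemma foldl_act_None: "w \<noteq> [] \<Longrightarrow> foldl (act mult gen) None w = Some (eval_word mult gen w)"
  by (cases w) (auto simp: foldl_act_Some)

lemma foldl_mult_assoc:
  assumes "semigroup_on S mult" "gen ` X \<subseteq> S"
  shows "g \<in> S \<Longrightarrow> s \<in> S \<Longrightarrow> set xs \<subseteq> X \<Longrightarrow>
    foldl (\<lambda>a y. mult a (gen y)) (mult g s) xs = mult g (foldl (\<lambda>a y. mult a (gen y)) s xs)"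
proof (induction xs arbitrary: s)
  case Nil then show ?case by simp
next
  case (Cons x xs)
  have gx: "gen x \<in> S" using Cons.prems assms(2) by auto
  have "mult (mult g s) (gen x) = mult g (mult s (gen x))"
    using assms(1) Cons.prems gx unfolding semigroup_on_def by auto
  moreover have "mult s (gen x) \<in> S" using assms(1) Cons.prems gx unfolding semigroup_on_def by auto
  ultimately show ?case using Cons by simp
qed

lemma foldl_act_Some_eval:
  assumes "semigroup_on S mult" "gen ` X \<subseteq> S"
  shows "g \<in> S \<Longrightarrow> w \<noteq> [] \<Longrightarrow> set w \<subseteq> X \<Longrightarrow>
     foldl (act mult gen) (Some g) w = Some (mult g (eval_word mult gen w))"
proof (cases w)
  case (Cons x xs)
  assume h: "g \<in> S" "set w \<subseteq> X"
  have gx: "gen x \<in> S" using Cons h assms(2) by auto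
  show ?thesis using Cons h gx foldl_mult_assoc[OF assms, of g "gen x" xs]
    by (simp add: foldl_act_Some)
qed simp

lemma last_letter:
  assumes "semigroup_on S mult" "generators S mult gen X" "g \<in> S"
  shows "\<exists>x\<in>X. \<exists>b\<in>mon1 S. act mult gen b x = Some g"
proof -
  obtain w where w: "w \<noteq> []" "set w \<subseteq> X" "eval_word mult gen w = g"
    using assms unfolding generators_def by blast
  obtain w' x where wx: "w = w' @ [x]" using w(1) rev_exhaust by blast
  have clos: "\<forall>a\<in>S. \<forall>b\<in>S. mult a b \<in> S" using assms(1) unfolding semigroup_on_def by auto
  have gX: "gen ` X \<subseteq> S" using assms(2) unfolding generators_def by auto
  have "foldl (act mult gen) None w = Some g" using foldl_act_None w by metis
  hence "act mult gen (foldl (act mult gen) None w') x = Some g" using wx by simp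
  moreover have "foldl (act mult gen) None w' \<in> mon1 S"
    using foldl_act_mon1[OF clos gX, of None w'] w(2) wx by (auto simp: mon1_def)
  moreover have "x \<in> X" using w(2) wx by auto
  ultimately show ?thesis by blast
qed

lemma rees_fst: "fst (rees_mult mult P a b) = fst a"
  by (cases a; cases b) auto

lemma rees_snd2: "snd (snd (rees_mult mult P a b)) = snd (snd b)"
  by (cases a; cases b) auto

lemma foldl_rees_fst: "fst (foldl (\<lambda>a y. rees_mult mult P a (tau y)) acc ys) = fst acc"
  by (induction ys arbitrary: acc) (auto simp: rees_fst)

lemma rees_elem_ij:
  assumes "generators (rees_carrier S I J) (rees_mult mult P) tau Y" "m \<in> rees_carrier S I J"
  shows "\<exists>y1\<in>Y. \<exists>y2\<in>Y. fst m = fst (tau y1) \<and> snd (snd m) = snd (snd (tau y2))"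
proof -
  obtain w where w: "w \<noteq> []" "set w \<subseteq> Y" "eval_word (rees_mult mult P) tau w = m"
    using assms unfolding generators_def by blast
  obtain y ys where yys: "w = y # ys" using w(1) by (cases w) auto
  have "m = foldl (\<lambda>a y. rees_mult mult P a (tau y)) (tau y) ys" using w(3) yys by simp
  then have 1: "fst m = fst (tau y)" by (simp add: foldl_rees_fst)
  have "\<exists>y2\<in>Y. snd (snd m) = snd (snd (tau y2))"
  proof (cases ys rule: rev_exhaust)
    case Nil then show ?thesis using w yys by auto
  next
    case (snoc ys' z) then show ?thesis using w yys by (auto simp: rees_snd2)
  qed
  then show ?thesis using 1 w yys by auto
qed

lemma trun_no_out: "trun Delta q w z q' \<Longrightarrow> (\<And>u v q1. (q, u, v, q1) \<notin> Delta) \<Longrightarrow> w = [] \<and> z = []"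
  by (erule trun.cases) auto

theorem theorem4p1:
  fixes S :: "'a set" and mult :: "'a \<Rightarrow> 'a \<Rightarrow> 'a"
    and I :: "'i set" and J :: "'j set" and P :: "'j \<Rightarrow> 'i \<Rightarrow> 'a"
    and X :: "'x set" and sigma :: "'x \<Rightarrow> 'a"
    and Y :: "'y set" and tau :: "'y \<Rightarrow> 'i \<times> 'a \<times> 'j"
  assumes "semigroup_on S mult"
    and "\<forall>j\<in>J. \<forall>i\<in>I. P j i \<in> S"
    and "finitely_generated (rees_carrier S I J) (rees_mult mult P)"
    and "finite X" and "generators S mult sigma X"
    and "finite Y" and "generators (rees_carrier S I J) (rees_mult mult P) tau Y"
  shows "\<exists>Phi. rational_transduction (hat X) (hat Y) Phi \<and>
           loop_problem (rees_carrier S I J) (rees_mult mult P) tau Y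
             = kleene (rel_image Phi (loop_problem S mult sigma X))"
proof -
  let ?M = "rees_carrier S I J" and ?mm = "rees_mult mult P"
  have clos: "\<forall>a\<in>S. \<forall>b\<in>S. mult a b \<in> S" using assms(1) unfolding semigroup_on_def by auto
  have assoc: "\<And>a b c. a \<in> S \<Longrightarrow> b \<in> S \<Longrightarrow> c \<in> S \<Longrightarrow> mult (mult a b) c = mult a (mult b c)"
    using assms(1) unfolding semigroup_on_def by auto
  have gX: "sigma ` X \<subseteq> S" using assms(5) unfolding generators_def by auto
  have surjX: "\<forall>s\<in>S. \<exists>w. w \<noteq> [] \<and> set w \<subseteq> X \<and> eval_word mult sigma w = s"
    using assms(5) unfolding generators_def by auto
  have closM: "\<forall>a\<in>?M. \<forall>b\<in>?M. ?mm a b \<in> ?M" using clos assms(2) by (auto simp: rees_carrier_def)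
  have gY: "tau ` Y \<subseteq> ?M" using assms(7) unfolding generators_def by auto
  define ii where "ii y = fst (tau y)" for y
  define gg where "gg y = fst (snd (tau y))" for y
  define jj where "jj y = snd (snd (tau y))" for y
  have tau_eq: "tau y = (ii y, gg y, jj y)" for y by (simp add: ii_def gg_def jj_def)
  have tauY: "ii y \<in> I \<and> gg y \<in> S \<and> jj y \<in> J" if "y \<in> Y" for y
    using gY that tau_eq[of y] by (auto simp: rees_carrier_def)
  define IJ where "IJ = ii ` Y \<times> jj ` Y"
  have finIJ: "finite IJ" using assms(6) by (simp add: IJ_def)
  have IJ_sub: "fst p \<in> I \<and> snd p \<in> J" if "p \<in> IJ" for p using tauY that by (auto simp: IJ_def)
  have elemIJ: "(fst m, snd (snd m)) \<in> IJ" if "m \<in> ?M" for m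
    using rees_elem_ij[OF assms(7) that] by (auto simp: IJ_def ii_def jj_def)
  obtain f :: "'i \<times> 'j \<Rightarrow> nat" and n where f: "f ` IJ = {i. i < n}" "inj_on f IJ"
    using finite_imp_inj_to_nat_seg[OF finIJ] by blast
  define code where "code p = f p + 2" for p
  have code_inj: "p = p'" if "p \<in> IJ" "p' \<in> IJ" "code p = code p'" for p p'
    using f(2) that by (auto simp: code_def inj_on_def)
  have code_ne: "code p \<noteq> 0" "code p \<noteq> 1" "0 \<noteq> code p" "1 \<noteq> code p" for p
    by (auto simp: code_def)
  define U where "U y = (SOME w. w \<noteq> [] \<and> set w \<subseteq> X \<and> eval_word mult sigma w = gg y)" for y
  have U: "U y \<noteq> [] \<and> set (U y) \<subseteq> X \<and> eval_word mult sigma (U y) = gg y" if "y \<in> Y" for y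
    unfolding U_def by (rule someI_ex) (use surjX tauY that in blast)
  define W where "W j y = (SOME w. w \<noteq> [] \<and> set w \<subseteq> X \<and>
      eval_word mult sigma w = mult (P j (ii y)) (gg y))" for j y
  have W: "W j y \<noteq> [] \<and> set (W j y) \<subseteq> X \<and> eval_word mult sigma (W j y) = mult (P j (ii y)) (gg y)"
    if "j \<in> J" "y \<in> Y" for j y
  proof -
    have h: "mult (P j (ii y)) (gg y) \<in> S" using clos assms(2) tauY that by auto
    show ?thesis unfolding W_def by (rule someI_ex) (use surjX h in blast)
  qed
  define D1 where "D1 = (\<lambda>y. (0::nat, map Pos (U y), [Pos y], code (ii y, jj y))) ` Y"
  define D2 where "D2 = (\<lambda>(p, y). (code p, map Pos (W (snd p) y), [Pos y], code (fst p, jj y))) ` (IJ \<times> Y)"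
  define D3 where "D3 = (\<lambda>y. (code (ii y, jj y), map Neg (rev (U y)), [Neg y], 1::nat)) ` Y"
  define D4 where "D4 = (\<lambda>((p, y), x). (code (fst p, jj y), map Neg (rev (W (snd p) y)) @ [Neg x, Pos x],
       [Neg y], code p)) ` ((IJ \<times> Y) \<times> X)"
  define Delta where "Delta = D1 \<union> D2 \<union> D3 \<union> D4"
  define Phi where "Phi = {(u, v). \<exists>q\<in>{0::nat}. \<exists>q'\<in>{1::nat}. trun Delta q u v q'}"
  have rt: "rational_transduction (hat X) (hat Y) Phi"
    unfolding rational_transduction_def
  proof (rule exI[of _ Delta], rule exI[of _ "{0}"], rule exI[of _ "{1}"], intro conjI)
    show "finite Delta" using assms(4,6) finIJ by (simp add: Delta_def D1_def D2_def D3_def D4_def)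
    show "finite {0::nat}" "finite {1::nat}" by simp_all
    show "\<forall>(q, u, v, q') \<in> Delta. set u \<subseteq> hat X \<and> set v \<subseteq> hat Y"
      using U W IJ_sub by (fastforce simp: Delta_def D1_def D2_def D3_def D4_def hat_def)
    show "Phi = {(u, v). \<exists>q\<in>{0}. \<exists>q'\<in>{1}. trun Delta q u v q'}" by (simp add: Phi_def)
  qed
  have no1: "(1, u, v, q) \<notin> Delta" for u v q
    by (auto simp: Delta_def D1_def D2_def D3_def D4_def code_def)
  have trun1: "w = [] \<and> z = []" if "trun Delta 1 w z q" for w z q
    using trun_no_out[OF that] no1 by blast
  have Mpos: "lpath ?M ?mm tau Y a [Pos y] (act ?mm tau a y)" if "a \<in> mon1 ?M" "y \<in> Y" for a y
    using that act_mon1[OF closM gY] by (auto intro: lpath.intros)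
  have Mneg: "lpath ?M ?mm tau Y (act ?mm tau a y) [Neg y] a" if "a \<in> mon1 ?M" "y \<in> Y" for a y
    using that by (auto intro: lpath.intros)
  have actM: "act ?mm tau (Some (i, g, j)) y = Some (i, mult (mult g (P j (ii y))) (gg y), jj y)" for i g j y
    by (simp add: tau_eq[of y])
  define Rel where "Rel q c a \<longleftrightarrow> (q = 0 \<and> c = None \<and> a = None) \<or>
     (\<exists>p g. p \<in> IJ \<and> q = code p \<and> g \<in> S \<and> c = Some g \<and> a = Some (fst p, g, snd p))" for q c a
  have RelC: "\<exists>g. g \<in> S \<and> c = Some g \<and> a = Some (fst p, g, snd p)"
    if "Rel (code p) c a" "p \<in> IJ" for p c a
  proof -
    from that(1) obtain p' g where "p' \<in> IJ" "code p = code p'" "g \<in> S" "c = Some g"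
      "a = Some (fst p', g, snd p')" unfolding Rel_def using code_ne by blast
    moreover then have "p' = p" using code_inj that(2) by metis
    ultimately show ?thesis by blast
  qed
  have core: "lpath ?M ?mm tau Y a v None"
    if "trun Delta q u v q'" "q' = 1" "lpath S mult sigma X c u None" "Rel q c a" for q u v q' c a
    using that
  proof (induction arbitrary: c a rule: trun.induct)
    case (trun_nil q)
    then show ?case using code_ne by (auto simp: Rel_def)
  next
    case (trun_step q u1 v1 q1 w z q'')
    from lpath_split[OF clos gX trun_step.prems(2)] obtain e where
      e: "lpath S mult sigma X c u1 e" "lpath S mult sigma X e w None" by blast
    have "(q, u1, v1, q1) \<in> D1 \<or> (q, u1, v1, q1) \<in> D2 \<or> (q, u1, v1, q1) \<in> D3 \<or> (q, u1, v1, q1) \<in> D4"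
      using trun_step.hyps(1) by (auto simp: Delta_def)
    then show ?case
    proof (elim disjE)
      assume "(q, u1, v1, q1) \<in> D1"
      then obtain y where y: "y \<in> Y" "q = 0" "u1 = map Pos (U y)" "v1 = [Pos y]" "q1 = code (ii y, jj y)"
        unfolding D1_def by auto
      have ca: "c = None" "a = None" using trun_step.prems(3) y(2) code_ne by (auto simp: Rel_def)
      have "e = Some (gg y)" using lpath_Pos_word[OF e(1)[unfolded y(3)]] ca foldl_act_None U[OF y(1)] by metis
      moreover have "(ii y, jj y) \<in> IJ" using y(1) by (auto simp: IJ_def)
      ultimately have "Rel q1 e (Some (tau y))" using y tauY[OF y(1)] by (auto simp: Rel_def tau_eq[of y])
      then have "lpath ?M ?mm tau Y (Some (tau y)) z None" using trun_step.IH trun_step.prems(1) e(2) by blast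
      moreover have "lpath ?M ?mm tau Y None [Pos y] (Some (tau y))"
        using Mpos[of None y] y(1) by (simp add: mon1_def)
      ultimately show ?thesis using ca y(4) lpath_append by fastforce
    next
      assume "(q, u1, v1, q1) \<in> D2"
      then obtain p y where y: "p \<in> IJ" "y \<in> Y" "q = code p" "u1 = map Pos (W (snd p) y)" "v1 = [Pos y]"
         "q1 = code (fst p, jj y)"
        unfolding D2_def by auto
      obtain g where g: "g \<in> S" "c = Some g" "a = Some (fst p, g, snd p)"
        using trun_step.prems(3) y(1,3) RelC by blast
      have Pin: "P (snd p) (ii y) \<in> S" using assms(2) IJ_sub[OF y(1)] tauY[OF y(2)] by auto
      have Wy: "W (snd p) y \<noteq> [] \<and> set (W (snd p) y) \<subseteq> X \<and> eval_word mult sigma (W (snd p) y) = mult (P (snd p) (ii y)) (gg y)"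
        using W IJ_sub[OF y(1)] y(2) by blast
      have "e = Some (mult g (mult (P (snd p) (ii y)) (gg y)))"
        using lpath_Pos_word[OF e(1)[unfolded y(4)]] g(2) foldl_act_Some_eval[OF assms(1) gX g(1)] Wy by metis
      also have "\<dots> = Some (mult (mult g (P (snd p) (ii y))) (gg y))"
        using assoc g(1) Pin tauY[OF y(2)] by simp
      finally have ee: "e = Some (mult (mult g (P (snd p) (ii y))) (gg y))" .
      have "(fst p, jj y) \<in> IJ" using y(1,2) by (auto simp: IJ_def)
      moreover have "mult (mult g (P (snd p) (ii y))) (gg y) \<in> S" using clos g(1) Pin tauY[OF y(2)] by auto
      ultimately have "Rel q1 e (Some (fst p, mult (mult g (P (snd p) (ii y))) (gg y), jj y))"
        using y(6) ee by (auto simp: Rel_def)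
      then have "lpath ?M ?mm tau Y (Some (fst p, mult (mult g (P (snd p) (ii y))) (gg y), jj y)) z None"
        using trun_step.IH trun_step.prems(1) e(2) by blast
      moreover have "a \<in> mon1 ?M" using g IJ_sub[OF y(1)] by (auto simp: mon1_def rees_carrier_def)
      then have "lpath ?M ?mm tau Y a [Pos y] (Some (fst p, mult (mult g (P (snd p) (ii y))) (gg y), jj y))"
        using Mpos[of a y] y(2) g(3) actM by simp
      ultimately show ?thesis using y(5) lpath_append by fastforce
    next
      assume "(q, u1, v1, q1) \<in> D3"
      then obtain y where y: "y \<in> Y" "q = code (ii y, jj y)" "u1 = map Neg (rev (U y))" "v1 = [Neg y]" "q1 = 1"
        unfolding D3_def by auto
      have yIJ: "(ii y, jj y) \<in> IJ" using y(1) by (auto simp: IJ_def)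
      obtain g where g: "g \<in> S" "c = Some g" "a = Some (ii y, g, jj y)"
        using trun_step.prems(3) y(2) yIJ RelC by fastforce
      have wz: "w = [] \<and> z = []" using trun1 trun_step.hyps(2) y(5) by blast
      then have "e = None" using e(2) lpath_Nil_inv by metis
      then have "Some (gg y) = Some g"
        using lpath_Neg_word[OF clos gX e(1)[unfolded y(3)]] g(2) foldl_act_None U[OF y(1)] by metis
      then have "a = act ?mm tau None y" using g(3) by (simp add: tau_eq[of y])
      then have "lpath ?M ?mm tau Y a [Neg y] None" using Mneg[of None y] y(1) by (simp add: mon1_def)
      then show ?thesis using wz y(4) by simp
    next
      assume "(q, u1, v1, q1) \<in> D4"
      then obtain p y x where y: "p \<in> IJ" "y \<in> Y" "x \<in> X" "q = code (fst p, jj y)"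
          "u1 = map Neg (rev (W (snd p) y)) @ [Neg x, Pos x]" "v1 = [Neg y]" "q1 = code p"
        unfolding D4_def by auto
      have yIJ: "(fst p, jj y) \<in> IJ" using y(1,2) by (auto simp: IJ_def)
      obtain h where h: "h \<in> S" "c = Some h" "a = Some (fst p, h, jj y)"
        using trun_step.prems(3) y(4) yIJ RelC by fastforce
      from lpath_split[OF clos gX e(1)[unfolded y(5)]] obtain e1 where
        e1: "lpath S mult sigma X c (map Neg (rev (W (snd p) y))) e1" "lpath S mult sigma X e1 [Neg x, Pos x] e"
        by blast
      from lpath_Neg_inv[OF e1(2)] obtain b where b: "b \<in> mon1 S" "e1 = act mult sigma b x"
          "lpath S mult sigma X b [Pos x] e" by blast
      have "e = act mult sigma b x" using lpath_Pos_inv[OF b(3)] lpath_Nil_inv by metis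
      then have ee1: "e = e1" using b(2) by simp
      have N: "foldl (act mult sigma) e1 (W (snd p) y) = c \<and> e1 \<in> mon1 S"
        using lpath_Neg_word[OF clos gX e1(1)] .
      obtain g' where g': "e1 = Some g'" using b(2) by (cases b) auto
      have g'S: "g' \<in> S" using N g' by (auto simp: mon1_def)
      have Pin: "P (snd p) (ii y) \<in> S" using assms(2) IJ_sub[OF y(1)] tauY[OF y(2)] by auto
      have Wy: "W (snd p) y \<noteq> [] \<and> set (W (snd p) y) \<subseteq> X \<and> eval_word mult sigma (W (snd p) y) = mult (P (snd p) (ii y)) (gg y)"
        using W IJ_sub[OF y(1)] y(2) by blast
      have "Some h = Some (mult g' (mult (P (snd p) (ii y)) (gg y)))"
        using N g' h(2) foldl_act_Some_eval[OF assms(1) gX g'S] Wy by metis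
      also have "\<dots> = Some (mult (mult g' (P (snd p) (ii y))) (gg y))"
        using assoc g'S Pin tauY[OF y(2)] by simp
      finally have hh: "h = mult (mult g' (P (snd p) (ii y))) (gg y)" by simp
      have "Rel q1 e (Some (fst p, g', snd p))" using y(1,7) ee1 g' g'S by (auto simp: Rel_def)
      then have "lpath ?M ?mm tau Y (Some (fst p, g', snd p)) z None"
        using trun_step.IH trun_step.prems(1) e(2) by blast
      moreover have "Some (fst p, g', snd p) \<in> mon1 ?M" using g'S IJ_sub[OF y(1)] by (auto simp: mon1_def rees_carrier_def)
      then have "lpath ?M ?mm tau Y a [Neg y] (Some (fst p, g', snd p))"
        using Mneg[of "Some (fst p, g', snd p)" y] y(2) h(3) hh actM by simp
      ultimately show ?thesis using y(6) lpath_append by fastforce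
    qed
  qed
  define L where "L = loop_problem S mult sigma X"
  define K where "K = kleene (rel_image Phi L)"
  have K_nil: "[] \<in> K" unfolding K_def kleene_def by (auto intro: exI[of _ "[]"])
  have K_cons: "x @ v \<in> K" if "x \<in> rel_image Phi L" "v \<in> K" for x v
  proof -
    from that(2) obtain ws where "v = concat ws" "set ws \<subseteq> rel_image Phi L" unfolding K_def kleene_def by blast
    then show ?thesis using that(1) unfolding K_def kleene_def by (auto intro!: exI[of _ "x # ws"])
  qed
  have Img: "v \<in> rel_image Phi L" if "lpath S mult sigma X None u None" "trun Delta 0 u v 1" for u v
    using that unfolding rel_image_def Phi_def L_def loop_problem_def by auto
  have Img_sub: "lpath ?M ?mm tau Y None v None" if "v \<in> rel_image Phi L" for v
  proof -
    from that obtain u where "lpath S mult sigma X None u None" "trun Delta 0 u v 1"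
      unfolding rel_image_def Phi_def L_def loop_problem_def by auto
    then show ?thesis using core[of 0 u v 1 None None] by (simp add: Rel_def)
  qed
  have K_sub: "lpath ?M ?mm tau Y None (concat ws) None" if "set ws \<subseteq> rel_image Phi L" for ws
    using that
  proof (induction ws)
    case Nil then show ?case by (auto intro: lpath.nil simp: mon1_def)
  next
    case (Cons x ws) then show ?case using Img_sub lpath_append by fastforce
  qed
  have dir2: "(a = None \<longrightarrow> w \<in> K) \<and> (\<forall>m. a = Some m \<longrightarrow> (\<exists>v1 v2 u. w = v1 @ v2 \<and> v2 \<in> K \<and>
      lpath S mult sigma X (Some (fst (snd m))) u None \<and> trun Delta (code (fst m, snd (snd m))) u v1 1))"
    if "lpath ?M ?mm tau Y a w b" "b = None" for a w b
    using that
  proof (induction rule: lpath.induct)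
    case (nil a)
    then show ?case using K_nil by simp
  next
    case (pos a y w b)
    obtain m' where m': "act ?mm tau a y = Some m'" by (cases a) auto
    from pos.IH pos.prems m' obtain v1 v2 u where IH: "w = v1 @ v2" "v2 \<in> K"
      "lpath S mult sigma X (Some (fst (snd m'))) u None" "trun Delta (code (fst m', snd (snd m'))) u v1 1"
      by blast
    show ?case
    proof (cases a)
      case None
      then have mt: "m' = (ii y, gg y, jj y)" using m' tau_eq[of y] by simp
      have Uy: "foldl (act mult sigma) None (U y) = Some (gg y)" using foldl_act_None U[OF pos.hyps(2)] by metis
      have "lpath S mult sigma X None (map Pos (U y)) (Some (gg y))"
        using lpath_Pos_word_intro[OF clos gX, of None "U y"] Uy U[OF pos.hyps(2)] by (simp add: mon1_def)
      then have lp: "lpath S mult sigma X None (map Pos (U y) @ u) None"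
        using lpath_append IH(3) mt by fastforce
      have dm: "(0, map Pos (U y), [Pos y], code (ii y, jj y)) \<in> Delta"
        using pos.hyps(2) by (auto simp: Delta_def D1_def)
      have "trun Delta 0 (map Pos (U y) @ u) ([Pos y] @ v1) 1"
        by (rule trun_step[OF dm]) (use IH(4) mt in simp)
      then have "Pos y # v1 \<in> rel_image Phi L" using Img lp by simp
      then have "(Pos y # v1) @ v2 \<in> K" using K_cons IH(2) by blast
      then show ?thesis using None IH(1) by simp
    next
      case (Some m0)
      obtain i g j where m0: "m0 = (i, g, j)" by (cases m0) auto
      have m0M: "m0 \<in> ?M" using pos.hyps(1) Some by (auto simp: mon1_def)
      then have gS: "g \<in> S" and ijIJ: "(i, j) \<in> IJ" using m0 elemIJ[of m0] by (auto simp: rees_carrier_def)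
      have jJ: "j \<in> J" using IJ_sub[OF ijIJ] by simp
      have mt: "m' = (i, mult (mult g (P j (ii y))) (gg y), jj y)" using m' Some m0 actM by simp
      have Pin: "P j (ii y) \<in> S" using assms(2) jJ tauY[OF pos.hyps(2)] by auto
      have Wy: "W j y \<noteq> [] \<and> set (W j y) \<subseteq> X \<and> eval_word mult sigma (W j y) = mult (P j (ii y)) (gg y)"
        using W jJ pos.hyps(2) by blast
      have "foldl (act mult sigma) (Some g) (W j y) = Some (mult g (mult (P j (ii y)) (gg y)))"
        using foldl_act_Some_eval[OF assms(1) gX gS] Wy by metis
      also have "\<dots> = Some (mult (mult g (P j (ii y))) (gg y))"
        using assoc gS Pin tauY[OF pos.hyps(2)] by simp
      finally have fw: "foldl (act mult sigma) (Some g) (W j y) = Some (mult (mult g (P j (ii y))) (gg y))" .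
      have "lpath S mult sigma X (Some g) (map Pos (W j y)) (Some (mult (mult g (P j (ii y))) (gg y)))"
        using lpath_Pos_word_intro[OF clos gX, of "Some g" "W j y"] fw Wy gS by (simp add: mon1_def)
      then have lp: "lpath S mult sigma X (Some g) (map Pos (W j y) @ u) None"
        using lpath_append IH(3) mt by fastforce
      have dm: "(code (i, j), map Pos (W j y), [Pos y], code (i, jj y)) \<in> Delta"
        using pos.hyps(2) ijIJ unfolding Delta_def D2_def by force
      have tr: "trun Delta (code (i, j)) (map Pos (W j y) @ u) ([Pos y] @ v1) 1"
        by (rule trun_step[OF dm]) (use IH(4) mt in simp)
      have "Pos y # w = ([Pos y] @ v1) @ v2 \<and> v2 \<in> K \<and> lpath S mult sigma X (Some g) (map Pos (W j y) @ u) None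
          \<and> trun Delta (code (i, j)) (map Pos (W j y) @ u) ([Pos y] @ v1) 1"
        using tr lp IH(1,2) by simp
      then show ?thesis using Some m0 by (intro conjI allI impI; simp only: option.simps prod.sel; blast)
    qed
  next
    case (neg a y w b)
    obtain m' where m': "act ?mm tau a y = Some m'" by (cases a) auto
    show ?case
    proof (cases a)
      case None
      then have mt: "m' = (ii y, gg y, jj y)" using m' tau_eq[of y] by simp
      have wK: "w \<in> K" using neg.IH neg.prems None by simp
      have Uy: "foldl (act mult sigma) None (U y) = Some (gg y)" using foldl_act_None U[OF neg.hyps(2)] by metis
      have lp: "lpath S mult sigma X (Some (gg y)) (map Neg (rev (U y))) None"
        using lpath_Neg_word_intro[OF clos gX, of None "U y"] Uy U[OF neg.hyps(2)] by (simp add: mon1_def)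
      have dm: "(code (ii y, jj y), map Neg (rev (U y)), [Neg y], 1) \<in> Delta"
        using neg.hyps(2) by (auto simp: Delta_def D3_def)
      have "trun Delta (code (ii y, jj y)) (map Neg (rev (U y)) @ []) ([Neg y] @ []) 1"
        by (rule trun_step[OF dm], rule trun_nil)
      then have "Neg y # w = [Neg y] @ w \<and> w \<in> K \<and> lpath S mult sigma X (Some (gg y)) (map Neg (rev (U y)) @ []) None
          \<and> trun Delta (code (ii y, jj y)) (map Neg (rev (U y)) @ []) ([Neg y] @ []) 1"
        using lp wK by simp
      then show ?thesis using m' mt by (intro conjI allI impI; simp only: option.simps prod.sel; blast)
    next
      case (Some m0)
      from neg.IH neg.prems Some obtain v1 v2 u where IH: "w = v1 @ v2" "v2 \<in> K"
        "lpath S mult sigma X (Some (fst (snd m0))) u None" "trun Delta (code (fst m0, snd (snd m0))) u v1 1"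
        by blast
      obtain i g j where m0: "m0 = (i, g, j)" by (cases m0) auto
      have m0M: "m0 \<in> ?M" using neg.hyps(1) Some by (auto simp: mon1_def)
      then have gS: "g \<in> S" and ijIJ: "(i, j) \<in> IJ" using m0 elemIJ[of m0] by (auto simp: rees_carrier_def)
      have jJ: "j \<in> J" using IJ_sub[OF ijIJ] by simp
      have mt: "m' = (i, mult (mult g (P j (ii y))) (gg y), jj y)" using m' Some m0 actM by simp
      have Pin: "P j (ii y) \<in> S" using assms(2) jJ tauY[OF neg.hyps(2)] by auto
      have Wy: "W j y \<noteq> [] \<and> set (W j y) \<subseteq> X \<and> eval_word mult sigma (W j y) = mult (P j (ii y)) (gg y)"
        using W jJ neg.hyps(2) by blast
      have "foldl (act mult sigma) (Some g) (W j y) = Some (mult g (mult (P j (ii y)) (gg y)))"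
        using foldl_act_Some_eval[OF assms(1) gX gS] Wy by metis
      also have "\<dots> = Some (mult (mult g (P j (ii y))) (gg y))"
        using assoc gS Pin tauY[OF neg.hyps(2)] by simp
      finally have fw: "foldl (act mult sigma) (Some g) (W j y) = Some (mult (mult g (P j (ii y))) (gg y))" .
      have lp1: "lpath S mult sigma X (Some (mult (mult g (P j (ii y))) (gg y))) (map Neg (rev (W j y))) (Some g)"
        using lpath_Neg_word_intro[OF clos gX, of "Some g" "W j y"] fw Wy gS by (simp add: mon1_def)
      obtain x b' where xb: "x \<in> X" "b' \<in> mon1 S" "act mult sigma b' x = Some g"
        using last_letter[OF assms(1,5) gS] by blast
      have "lpath S mult sigma X b' (Pos x # u) None"
        by (rule lpath.pos) (use IH(3) m0 xb in simp_all)
      then have "lpath S mult sigma X (act mult sigma b' x) (Neg x # Pos x # u) None"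
        by (rule lpath.neg[OF xb(2) xb(1)])
      then have lp2: "lpath S mult sigma X (Some g) ([Neg x, Pos x] @ u) None" using xb(3) by simp
      have lp: "lpath S mult sigma X (Some (mult (mult g (P j (ii y))) (gg y)))
          ((map Neg (rev (W j y)) @ [Neg x, Pos x]) @ u) None"
        using lpath_append[OF lp1 lp2] by simp
      have dm: "(code (i, jj y), map Neg (rev (W j y)) @ [Neg x, Pos x], [Neg y], code (i, j)) \<in> Delta"
        using neg.hyps(2) ijIJ xb(1) unfolding Delta_def D4_def by force
      have tr: "trun Delta (code (i, jj y)) ((map Neg (rev (W j y)) @ [Neg x, Pos x]) @ u) ([Neg y] @ v1) 1"
        by (rule trun_step[OF dm]) (use IH(4) m0 in simp)
      have "Neg y # w = ([Neg y] @ v1) @ v2 \<and> v2 \<in> K \<and>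
          lpath S mult sigma X (Some (mult (mult g (P j (ii y))) (gg y))) ((map Neg (rev (W j y)) @ [Neg x, Pos x]) @ u) None
          \<and> trun Delta (code (i, jj y)) ((map Neg (rev (W j y)) @ [Neg x, Pos x]) @ u) ([Neg y] @ v1) 1"
        using tr lp IH(1,2) by simp
      then show ?thesis using m' mt by (intro conjI allI impI; simp only: option.simps prod.sel; blast)
    qed
  qed
  have eq: "loop_problem ?M ?mm tau Y = K"
  proof
    show "loop_problem ?M ?mm tau Y \<subseteq> K"
      using dir2 unfolding loop_problem_def by blast
    show "K \<subseteq> loop_problem ?M ?mm tau Y"
      using K_sub unfolding K_def kleene_def loop_problem_def by blast
  qed
  show ?thesis using rt eq unfolding K_def L_def by blast
qed

end
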